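(* Let $r\ge 2$ and $2\le s\le r$ be integers and let $H$ be a linear $r$-uniform hypergraph. Then \[ q(H)\le \frac{1}{\binom{r-1}{s-1}}\,q(\partial_s H). \] In particular, $(r-1)\,q(H)\le q(\partial H)$, where $q(\partial H)$ is the largest eigenvalue of the signless Laplacian matrix of the graph $\partial H$.
   Context: An $r$-uniform hypergraph ($r$-graph) $H$ has a finite vertex set $V(H)$ and a set $E(H)$ of $r$-element subsets of $V(H)$. It is linear if any two distinct edges share at most one vertex. $d_H(v)$ is the number of edges containing $v$. For an $r$-graph $H$ on $n$ vertices, its signless Laplacian spectral radius is \[ q(H)=\max_{\mathbf{x}\in\mathbb{R}^n,\ \|\mathbf{x}\|_r=1}\Big(\sum_{v\in V(H)}d_H(v)x_v^r + r\sum_{e\in E(H)}\prod_{v\in e}x_v\Big), \] where $\|\mathbf{x}\|_r=(\sum_v|x_v|^r)^{1/r}$. The $s$-shadow $\partial_s H$ is the $s$-graph on $V(H)$ whose edges are all $s$-subsets contained in some edge of $H$; $\partial H=\partial_2 H$ (a graph, for which $q$ coincides with the largest eigenvalue of $D+A$). *)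

theory Defs
  imports Complex_Main
begin

definition uniform_hypergraph :: "nat \<Rightarrow> 'a set \<Rightarrow> 'a set set \<Rightarrow> bool" where
  "uniform_hypergraph r V E \<longleftrightarrow> finite V \<and> (\<forall>e\<in>E. e \<subseteq> V \<and> card e = r)"

definition linear_hypergraph :: "'a set set \<Rightarrow> bool" where
  "linear_hypergraph E \<longleftrightarrow> (\<forall>e\<in>E. \<forall>f\<in>E. e \<noteq> f \<longrightarrow> card (e \<inter> f) \<le> 1)"

definition hdegree :: "'a set set \<Rightarrow> 'a \<Rightarrow> nat" where
  "hdegree E v = card {e\<in>E. v \<in> e}"

text \<open>The s-shadow: all s-subsets contained in some edge (vertex set unchanged).\<close>
definition shadow :: "nat \<Rightarrow> 'a set set \<Rightarrow> 'a set set" where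
  "shadow s E = {S. card S = s \<and> (\<exists>e\<in>E. S \<subseteq> e)}"

definition rnorm :: "nat \<Rightarrow> 'a set \<Rightarrow> ('a \<Rightarrow> real) \<Rightarrow> real" where
  "rnorm r V x = root r (\<Sum>v\<in>V. \<bar>x v\<bar> ^ r)"

definition slap_form :: "nat \<Rightarrow> 'a set \<Rightarrow> 'a set set \<Rightarrow> ('a \<Rightarrow> real) \<Rightarrow> real" where
  "slap_form r V E x = (\<Sum>v\<in>V. real (hdegree E v) * x v ^ r) + real r * (\<Sum>e\<in>E. \<Prod>v\<in>e. x v)"

text \<open>Signless Laplacian spectral radius (the maximum exists by compactness).\<close>
definition q_spec :: "nat \<Rightarrow> 'a set \<Rightarrow> 'a set set \<Rightarrow> real" where
  "q_spec r V E = Sup {slap_form r V E x | x. rnorm r V x = 1}"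

end

theory Submission
  imports Defs
begin

definition ksub :: "nat \<Rightarrow> 'a set \<Rightarrow> 'a set set" where
  "ksub s e = {S. S \<subseteq> e \<and> card S = s}"

lemma finite_ksub: "finite e \<Longrightarrow> finite (ksub s e)"
  unfolding ksub_def by (rule finite_subset[of _ "Pow e"]) auto

lemma card_ksub: "finite e \<Longrightarrow> card (ksub s e) = card e choose s"
  unfolding ksub_def by (rule n_subsets)

lemma double_count:
  fixes w :: "'a \<Rightarrow> real"
  assumes "finite V" "finite F" "\<forall>S\<in>F. S \<subseteq> V"
  shows "(\<Sum>v\<in>V. real (hdegree F v) * w v) = (\<Sum>S\<in>F. \<Sum>v\<in>S. w v)"
proof -
  have "(\<Sum>S\<in>F. \<Sum>v\<in>S. w v) = (\<Sum>S\<in>F. \<Sum>v\<in>V. if v \<in> S then w v else 0)"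
  proof (rule sum.cong[OF refl])
    fix S assume "S \<in> F"
    then have "V \<inter> S = S" using assms by auto
    then show "sum w S = (\<Sum>v\<in>V. if v \<in> S then w v else 0)"
      using sum.inter_restrict[OF assms(1), of w S] by simp
  qed
  also have "\<dots> = (\<Sum>v\<in>V. \<Sum>S\<in>F. if v \<in> S then w v else 0)"
    by (rule sum.swap)
  also have "\<dots> = (\<Sum>v\<in>V. real (hdegree F v) * w v)"
  proof (rule sum.cong[OF refl])
    fix v
    have "(\<Sum>S\<in>F. if v \<in> S then w v else 0) = (\<Sum>S\<in>F \<inter> {S. v \<in> S}. w v)"
      using sum.inter_restrict[OF assms(2), of "\<lambda>_. w v" "{S. v \<in> S}"] by simp
    also have "\<dots> = real (card (F \<inter> {S. v \<in> S})) * w v" by simp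
    also have "F \<inter> {S. v \<in> S} = {e\<in>F. v \<in> e}" by auto
    finally show "(\<Sum>S\<in>F. if v \<in> S then w v else 0) = real (hdegree F v) * w v"
      unfolding hdegree_def .
  qed
  finally show ?thesis by simp
qed

lemma card_ksub_v:
  assumes "finite e" "v \<in> e" "card e = r" "s \<ge> 1"
  shows "hdegree (ksub s e) v = (r - 1) choose (s - 1)"
proof -
  have eq: "{S\<in>ksub s e. v \<in> S} = insert v ` {B. B \<subseteq> e - {v} \<and> card B = s - 1}"
  proof
    show "{S\<in>ksub s e. v \<in> S} \<subseteq> insert v ` {B. B \<subseteq> e - {v} \<and> card B = s - 1}"
    proof
      fix S assume S: "S \<in> {S\<in>ksub s e. v \<in> S}"
      then have fS: "finite S" using assms finite_subset unfolding ksub_def by auto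
      have "S = insert v (S - {v})" using S by auto
      moreover have "card (S - {v}) = s - 1" using S fS unfolding ksub_def by auto
      moreover have "S - {v} \<subseteq> e - {v}" using S unfolding ksub_def by auto
      ultimately show "S \<in> insert v ` {B. B \<subseteq> e - {v} \<and> card B = s - 1}" by blast
    qed
  next
    show "insert v ` {B. B \<subseteq> e - {v} \<and> card B = s - 1} \<subseteq> {S\<in>ksub s e. v \<in> S}"
    proof
      fix S assume "S \<in> insert v ` {B. B \<subseteq> e - {v} \<and> card B = s - 1}"
      then obtain B where B: "B \<subseteq> e - {v}" "card B = s - 1" "S = insert v B" by auto
      have "finite B" using B assms finite_subset by blast
      moreover have "v \<notin> B" using B by auto
      ultimately have "card S = s" using B assms(4) by (simp add: card_insert_disjoint)
      then show "S \<in> {S\<in>ksub s e. v \<in> S}" using B assms unfolding ksub_def by auto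
    qed
  qed
  have inj: "inj_on (insert v) {B. B \<subseteq> e - {v} \<and> card B = s - 1}"
    by (rule inj_onI) blast
  have "hdegree (ksub s e) v = card {B. B \<subseteq> e - {v} \<and> card B = s - 1}"
    unfolding hdegree_def eq by (rule card_image[OF inj])
  also have "\<dots> = card (e - {v}) choose (s - 1)" using assms by (intro n_subsets) auto
  finally show ?thesis using assms by simp
qed


lemma binom_id:
  assumes "1 \<le> s" "s \<le> r"
  shows "real r * real ((r - 1) choose (s - 1)) = real (r choose s) * real s"
proof -
  have "Suc (r-1) * ((r-1) choose (s-1)) = (Suc (r-1) choose Suc (s-1)) * Suc (s-1)"
    by (rule Suc_times_binomial_eq)
  moreover have "Suc (r-1) = r" "Suc (s-1) = s" using assms by auto
  ultimately have "r * ((r-1) choose (s-1)) = (r choose s) * s" by simp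
  then show ?thesis by (metis of_nat_mult)
qed

lemma edge_amgm:
  fixes z :: "'a \<Rightarrow> real"
  assumes fe: "finite e" and ce: "card e = r" and s1: "1 \<le> s" and sr: "s \<le> r"
    and z0: "\<forall>v\<in>e. z v \<ge> 0"
  shows "real (r choose s) * (\<Prod>v\<in>e. z v) \<le> (\<Sum>S\<in>ksub s e. \<Prod>v\<in>S. z v powr (r / s))"
proof (cases "\<exists>v\<in>e. z v = 0")
  case True
  then have "(\<Prod>v\<in>e. z v) = 0" using fe by auto
  moreover have "0 \<le> (\<Sum>S\<in>ksub s e. \<Prod>v\<in>S. z v powr (r / s))"
    by (intro sum_nonneg prod_nonneg) auto
  ultimately show ?thesis by simp
next
  case False
  then have zp: "\<forall>v\<in>e. z v > 0" using z0 by force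
  define a where "a S = (\<Sum>v\<in>S. real r / real s * ln (z v))" for S
  define L where "L = (\<Sum>v\<in>e. ln (z v))"
  define N where "N = real (r choose s)"
  define C where "C = real ((r - 1) choose (s - 1))"
  have fK: "finite (ksub s e)" using fe by (rule finite_ksub)
  have cK: "real (card (ksub s e)) = N" using card_ksub[OF fe] ce N_def by simp
  have fS: "\<And>S. S \<in> ksub s e \<Longrightarrow> finite S \<and> S \<subseteq> e"
    using fe finite_subset unfolding ksub_def by blast
  have prodS: "(\<Prod>v\<in>S. z v powr (r / s)) = exp (a S)" if "S \<in> ksub s e" for S
  proof -
    have "(\<Prod>v\<in>S. z v powr (r / s)) = (\<Prod>v\<in>S. exp (real r / real s * ln (z v)))"
      proof (rule prod.cong[OF refl])
      fix v assume "v \<in> S"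
      then have "z v > 0" using fS[OF that] zp by blast
      then show "z v powr (r / s) = exp (real r / real s * ln (z v))" by (simp add: powr_def)
    qed
    also have "\<dots> = exp (a S)" unfolding a_def using fS[OF that] by (simp add: exp_sum)
    finally show ?thesis .
  qed
  have prode: "(\<Prod>v\<in>e. z v) = exp L"
    unfolding L_def using fe zp by (simp add: exp_sum)
  have suma: "(\<Sum>S\<in>ksub s e. a S) = real r / real s * C * L"
  proof -
    have "(\<Sum>S\<in>ksub s e. a S) = real r / real s * (\<Sum>S\<in>ksub s e. \<Sum>v\<in>S. ln (z v))"
      unfolding a_def by (simp add: sum_distrib_left)
    also have "(\<Sum>S\<in>ksub s e. \<Sum>v\<in>S. ln (z v)) = (\<Sum>v\<in>e. real (hdegree (ksub s e) v) * ln (z v))"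
      using double_count[OF fe fK, of "\<lambda>v. ln (z v)"] fS by simp
    also have "\<dots> = (\<Sum>v\<in>e. C * ln (z v))"
      using card_ksub_v[OF fe _ ce s1] C_def by (intro sum.cong) auto
    also have "\<dots> = C * L" unfolding L_def by (simp add: sum_distrib_left)
    finally show ?thesis by simp
  qed
  have sp: "real s > 0" using s1 by simp
  have NC: "real r / real s * C = N" using binom_id[OF s1 sr] sp unfolding C_def N_def
    by (simp add: field_simps)
  have "(\<Sum>S\<in>ksub s e. exp L * (1 + (a S - L))) \<le> (\<Sum>S\<in>ksub s e. exp (a S))"
  proof (rule sum_mono)
    fix S
    have "exp L * (1 + (a S - L)) \<le> exp L * exp (a S - L)"
      by (intro mult_left_mono exp_ge_add_one_self) auto
    also have "\<dots> = exp (a S)" by (simp add: exp_diff)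
    finally show "exp L * (1 + (a S - L)) \<le> exp (a S)" .
  qed
  moreover have "(\<Sum>S\<in>ksub s e. exp L * (1 + (a S - L))) = exp L * (N + N * L - N * L)"
  proof -
    have "(\<Sum>S\<in>ksub s e. exp L * (1 + (a S - L))) = exp L * (\<Sum>S\<in>ksub s e. (1 + a S - L))"
      by (simp add: sum_distrib_left add_diff_eq)
    also have "(\<Sum>S\<in>ksub s e. (1 + a S - L)) = N + N * L - N * L"
    proof -
      have "(\<Sum>S\<in>ksub s e. a S) = N * L" using suma NC[symmetric] by simp
      then show ?thesis using cK by (simp add: sum.distrib sum_subtractf)
    qed
    finally show ?thesis .
  qed
  ultimately have "N * exp L \<le> (\<Sum>S\<in>ksub s e. exp (a S))" by (simp add: mult.commute)
  then show ?thesis using prodS prode N_def by simp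
qed


lemma shadow_UN:
  assumes "uniform_hypergraph r V E"
  shows "shadow s E = (\<Union>e\<in>E. ksub s e)"
  unfolding shadow_def ksub_def by auto

lemma ksub_disj:
  assumes "uniform_hypergraph r V E" "linear_hypergraph E" "2 \<le> s"
    and "e \<in> E" "f \<in> E" "e \<noteq> f"
  shows "ksub s e \<inter> ksub s f = {}"
proof (rule ccontr)
  assume "ksub s e \<inter> ksub s f \<noteq> {}"
  then obtain S where S: "S \<subseteq> e" "S \<subseteq> f" "card S = s" unfolding ksub_def by auto
  have "finite e" using assms(1,4) unfolding uniform_hypergraph_def by (meson finite_subset)
  then have "card S \<le> card (e \<inter> f)" using S by (intro card_mono) auto
  moreover have "card (e \<inter> f) \<le> 1" using assms unfolding linear_hypergraph_def by auto
  ultimately show False using S assms(3) by simp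
qed

lemma finite_E: "uniform_hypergraph r V E \<Longrightarrow> finite E"
  unfolding uniform_hypergraph_def by (rule finite_subset[of _ "Pow V"]) auto

lemma rnorm_abs_le:
  assumes "rnorm t V y = 1" "t > 0" "finite V" "v \<in> V"
  shows "\<bar>y v\<bar> \<le> 1"
proof -
  have "(\<Sum>v\<in>V. \<bar>y v\<bar> ^ t) = 1" using assms unfolding rnorm_def by simp
  moreover have "\<bar>y v\<bar> ^ t \<le> (\<Sum>v\<in>V. \<bar>y v\<bar> ^ t)"
    using assms by (intro member_le_sum) auto
  ultimately have "\<bar>y v\<bar> ^ t \<le> 1" by simp
  then show ?thesis using assms(2) by (metis abs_ge_zero power_le_one_iff not_gr0)
qed

lemma slap_bdd:
  assumes "finite V" "finite F" "\<forall>S\<in>F. S \<subseteq> V" "t > 0"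
  shows "bdd_above {slap_form t V F y | y. rnorm t V y = 1}"
proof (rule bdd_aboveI)
  fix u assume "u \<in> {slap_form t V F y | y. rnorm t V y = 1}"
  then obtain y where y: "rnorm t V y = 1" "u = slap_form t V F y" by auto
  have a: "\<And>v. v \<in> V \<Longrightarrow> \<bar>y v\<bar> \<le> 1" using rnorm_abs_le[OF y(1) assms(4,1)] by blast
  have "(\<Sum>v\<in>V. real (hdegree F v) * y v ^ t) \<le> (\<Sum>v\<in>V. real (hdegree F v))"
  proof (rule sum_mono)
    fix v assume "v \<in> V"
    have "y v ^ t \<le> \<bar>y v ^ t\<bar>" by (rule abs_ge_self)
    also have "\<dots> = \<bar>y v\<bar> ^ t" by (simp add: power_abs)
    also have "\<dots> \<le> 1" using a[OF \<open>v \<in> V\<close>] by (simp add: power_le_one)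
    finally show "real (hdegree F v) * y v ^ t \<le> real (hdegree F v)"
      by (simp add: mult_left_le)
  qed
  moreover have "(\<Sum>S\<in>F. \<Prod>v\<in>S. y v) \<le> (\<Sum>S\<in>F. 1)"
  proof (rule sum_mono)
    fix S assume "S \<in> F"
    then have "\<forall>v\<in>S. \<bar>y v\<bar> \<le> 1" using a assms(3) by blast
    then have "(\<Prod>v\<in>S. \<bar>y v\<bar>) \<le> 1" by (intro prod_le_1) auto
    moreover have "(\<Prod>v\<in>S. y v) \<le> \<bar>\<Prod>v\<in>S. y v\<bar>" by (rule abs_ge_self)
    ultimately show "(\<Prod>v\<in>S. y v) \<le> 1" by (simp add: abs_prod)
  qed
  ultimately show "u \<le> (\<Sum>v\<in>V. real (hdegree F v)) + real t * real (card F)"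
  proof -
    have "(\<Sum>S\<in>F. (1::real)) = real (card F)" by simp
    have "real t * (\<Sum>S\<in>F. \<Prod>v\<in>S. y v) \<le> real t * real (card F)"
      using \<open>(\<Sum>S\<in>F. \<Prod>v\<in>S. y v) \<le> (\<Sum>S\<in>F. 1)\<close> by (intro mult_left_mono) auto
    then show ?thesis unfolding y slap_form_def
      using \<open>(\<Sum>v\<in>V. real (hdegree F v) * y v ^ t) \<le> (\<Sum>v\<in>V. real (hdegree F v))\<close> by linarith
  qed
qed


lemma powr_pow_eq:
  assumes "(z::real) \<ge> 0" "s > 0" "r > 0"
  shows "(z powr (real r / real s)) ^ s = z ^ r"
proof (cases "z = 0")
  case True then show ?thesis using assms by (simp add: zero_power)
next
  case False
  then have "(z powr (real r / real s)) ^ s = z powr (real s * (real r / real s))"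
    by (rule powr_power)
  also have "\<dots> = z powr (real r)" using assms by simp
  also have "\<dots> = z ^ r" using assms False by (simp add: powr_realpow)
  finally show ?thesis .
qed

lemma main_ineq:
  fixes z :: "'a \<Rightarrow> real"
  assumes r2: "r \<ge> 2" and s2: "2 \<le> s" and sr: "s \<le> r"
    and U: "uniform_hypergraph r V E" and Lin: "linear_hypergraph E"
    and z0: "\<forall>v. z v \<ge> 0"
  shows "real ((r - 1) choose (s - 1)) * slap_form r V E z
         \<le> slap_form s V (shadow s E) (\<lambda>v. z v powr (real r / real s))"
proof -
  define y where "y = (\<lambda>v. z v powr (real r / real s))"
  define C where "C = real ((r - 1) choose (s - 1))"
  define N where "N = real (r choose s)"
  have fV: "finite V" using U unfolding uniform_hypergraph_def by auto
  have fE: "finite E" using U by (rule finite_E)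
  have eV: "\<And>e. e \<in> E \<Longrightarrow> e \<subseteq> V \<and> card e = r" using U unfolding uniform_hypergraph_def by auto
  have fe: "\<And>e. e \<in> E \<Longrightarrow> finite e" using eV fV finite_subset by blast
  have sh: "shadow s E = (\<Union>e\<in>E. ksub s e)" using U by (rule shadow_UN)
  have disj: "\<forall>e\<in>E. \<forall>f\<in>E. e \<noteq> f \<longrightarrow> ksub s e \<inter> ksub s f = {}"
    using ksub_disj[OF U Lin s2] by blast
  have fK: "\<forall>e\<in>E. finite (ksub s e)" using fe finite_ksub by blast
  have fsh: "finite (shadow s E)" unfolding sh using fE fK by auto
  have shV: "\<forall>S\<in>shadow s E. S \<subseteq> V" unfolding sh ksub_def using eV by blast
  have yz: "\<And>v. y v ^ s = z v ^ r" unfolding y_def using z0 s2 r2 by (intro powr_pow_eq) auto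
  have SUM: "\<And>g. (\<Sum>S\<in>shadow s E. g S) = (\<Sum>e\<in>E. \<Sum>S\<in>ksub s e. g S)"
    unfolding sh using fE fK disj by (intro sum.UNION_disjoint) auto
  have deg: "(\<Sum>v\<in>V. real (hdegree (shadow s E) v) * y v ^ s)
      = C * (\<Sum>v\<in>V. real (hdegree E v) * z v ^ r)"
  proof -
    have "(\<Sum>v\<in>V. real (hdegree (shadow s E) v) * y v ^ s)
        = (\<Sum>S\<in>shadow s E. \<Sum>v\<in>S. y v ^ s)"
      by (rule double_count[OF fV fsh shV])
    also have "\<dots> = (\<Sum>e\<in>E. \<Sum>S\<in>ksub s e. \<Sum>v\<in>S. y v ^ s)" by (rule SUM)
    also have "\<dots> = (\<Sum>e\<in>E. \<Sum>v\<in>e. C * z v ^ r)"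
    proof (rule sum.cong[OF refl])
      fix e assume e: "e \<in> E"
      have "(\<Sum>S\<in>ksub s e. \<Sum>v\<in>S. y v ^ s) = (\<Sum>v\<in>e. real (hdegree (ksub s e) v) * y v ^ s)"
        using double_count[OF fe[OF e] finite_ksub[OF fe[OF e], of s], of "\<lambda>v. y v ^ s"]
        unfolding ksub_def by auto
      also have "\<dots> = (\<Sum>v\<in>e. C * z v ^ r)"
        using card_ksub_v[OF fe[OF e] _ _, of _ r s] eV[OF e] s2 yz unfolding C_def
        by (intro sum.cong) auto
      finally show "(\<Sum>S\<in>ksub s e. \<Sum>v\<in>S. y v ^ s) = (\<Sum>v\<in>e. C * z v ^ r)" .
    qed
    also have "\<dots> = C * (\<Sum>e\<in>E. \<Sum>v\<in>e. z v ^ r)" by (simp add: sum_distrib_left)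
    also have "(\<Sum>e\<in>E. \<Sum>v\<in>e. z v ^ r) = (\<Sum>v\<in>V. real (hdegree E v) * z v ^ r)"
      using double_count[OF fV fE, of "\<lambda>v. z v ^ r"] eV by auto
    finally show ?thesis .
  qed
  have edges: "N * (\<Sum>e\<in>E. \<Prod>v\<in>e. z v) \<le> (\<Sum>S\<in>shadow s E. \<Prod>v\<in>S. y v)"
  proof -
    have "N * (\<Sum>e\<in>E. \<Prod>v\<in>e. z v) = (\<Sum>e\<in>E. N * (\<Prod>v\<in>e. z v))"
      by (simp add: sum_distrib_left)
    also have "\<dots> \<le> (\<Sum>e\<in>E. \<Sum>S\<in>ksub s e. \<Prod>v\<in>S. y v)"
    proof (rule sum_mono)
      fix e assume e: "e \<in> E"
      show "N * (\<Prod>v\<in>e. z v) \<le> (\<Sum>S\<in>ksub s e. \<Prod>v\<in>S. y v)"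
        unfolding N_def y_def using edge_amgm[OF fe[OF e], of r s z] eV[OF e] s2 sr z0 by auto
    qed
    also have "\<dots> = (\<Sum>S\<in>shadow s E. \<Prod>v\<in>S. y v)" by (rule SUM[symmetric])
    finally show ?thesis .
  qed
  have bid: "real s * N = real r * C" using binom_id[of s r] s2 sr unfolding N_def C_def by simp
  have "C * slap_form r V E z = C * (\<Sum>v\<in>V. real (hdegree E v) * z v ^ r)
        + real s * (N * (\<Sum>e\<in>E. \<Prod>v\<in>e. z v))"
    unfolding slap_form_def using bid by (simp add: algebra_simps)
  also have "\<dots> \<le> C * (\<Sum>v\<in>V. real (hdegree E v) * z v ^ r)
        + real s * (\<Sum>S\<in>shadow s E. \<Prod>v\<in>S. y v)"
    using edges by (intro add_left_mono mult_left_mono) auto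
  also have "\<dots> = slap_form s V (shadow s E) y" unfolding slap_form_def deg ..
  finally show ?thesis unfolding C_def y_def .
qed


lemma part1:
  fixes V :: "'a set" and E :: "'a set set" and r s :: nat
  assumes r2: "r \<ge> 2" and s2: "2 \<le> s" and sr: "s \<le> r"
    and Vne: "V \<noteq> {}"
    and U: "uniform_hypergraph r V E" and Lin: "linear_hypergraph E"
  shows "q_spec r V E \<le> q_spec s V (shadow s E) / real ((r - 1) choose (s - 1))"
proof -
  define C where "C = real ((r - 1) choose (s - 1))"
  define Q where "Q = q_spec s V (shadow s E)"
  have Cp: "C > 0" unfolding C_def using s2 sr by simp
  have fV: "finite V" using U unfolding uniform_hypergraph_def by auto
  have fE: "finite E" using U by (rule finite_E)
  have fsh: "finite (shadow s E)" unfolding shadow_UN[OF U] using fE finite_ksub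
    U unfolding uniform_hypergraph_def by (meson finite_UN_I finite_subset)
  have shV: "\<forall>S\<in>shadow s E. S \<subseteq> V" using U unfolding shadow_def uniform_hypergraph_def by blast
  have bdd: "bdd_above {slap_form s V (shadow s E) y | y. rnorm s V y = 1}"
    using slap_bdd[OF fV fsh shV] s2 by simp
  obtain v0 where v0: "v0 \<in> V" using Vne by auto
  have ne: "{slap_form r V E x | x. rnorm r V x = 1} \<noteq> {}"
  proof -
    define x where "x = (\<lambda>v. if v = v0 then (1::real) else 0)"
    have "(\<Sum>v\<in>V. \<bar>x v\<bar> ^ r) = (\<Sum>v\<in>V. if v = v0 then 1 else 0)"
      unfolding x_def using r2 by (intro sum.cong) (auto simp: zero_power)
    also have "\<dots> = 1" using fV v0 by simp
    finally have "rnorm r V x = 1" unfolding rnorm_def using r2 by simp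
    then show ?thesis by blast
  qed
  have "q_spec r V E \<le> Q / C"
    unfolding q_spec_def
  proof (rule cSup_least[OF ne])
    fix u assume "u \<in> {slap_form r V E x | x. rnorm r V x = 1}"
    then obtain x where x: "rnorm r V x = 1" "u = slap_form r V E x" by auto
    define z where "z = (\<lambda>v. \<bar>x v\<bar>)"
    define y where "y = (\<lambda>v. z v powr (real r / real s))"
    have "slap_form r V E x \<le> slap_form r V E z"
    proof -
      have "(\<Sum>v\<in>V. real (hdegree E v) * x v ^ r) \<le> (\<Sum>v\<in>V. real (hdegree E v) * z v ^ r)"
      proof (rule sum_mono)
        fix v
        have "x v ^ r \<le> \<bar>x v ^ r\<bar>" by (rule abs_ge_self)
        also have "\<dots> = z v ^ r" unfolding z_def by (simp add: power_abs)
        finally show "real (hdegree E v) * x v ^ r \<le> real (hdegree E v) * z v ^ r"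
          by (intro mult_left_mono) auto
      qed
      moreover have "(\<Sum>e\<in>E. \<Prod>v\<in>e. x v) \<le> (\<Sum>e\<in>E. \<Prod>v\<in>e. z v)"
      proof (rule sum_mono)
        fix e
        have "(\<Prod>v\<in>e. x v) \<le> \<bar>\<Prod>v\<in>e. x v\<bar>" by (rule abs_ge_self)
        also have "\<dots> = (\<Prod>v\<in>e. z v)" unfolding z_def by (simp add: abs_prod)
        finally show "(\<Prod>v\<in>e. x v) \<le> (\<Prod>v\<in>e. z v)" .
      qed
      ultimately show ?thesis unfolding slap_form_def
        by (intro add_mono mult_left_mono) auto
    qed
    also have "C * slap_form r V E z \<le> slap_form s V (shadow s E) y"
      unfolding C_def y_def using main_ineq[OF r2 s2 sr U Lin] z_def by simp
    then have "slap_form r V E z \<le> slap_form s V (shadow s E) y / C"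
      using Cp by (simp add: pos_le_divide_eq mult.commute)
    also have "slap_form s V (shadow s E) y \<le> Q"
      unfolding Q_def q_spec_def
    proof (rule cSup_upper[OF _ bdd])
      have "(\<Sum>v\<in>V. \<bar>y v\<bar> ^ s) = (\<Sum>v\<in>V. \<bar>x v\<bar> ^ r)"
      proof (rule sum.cong[OF refl])
        fix v
        have "\<bar>y v\<bar> = y v" unfolding y_def by simp
        then show "\<bar>y v\<bar> ^ s = \<bar>x v\<bar> ^ r"
          unfolding y_def z_def using powr_pow_eq[of "\<bar>x v\<bar>" s r] s2 r2 by simp
      qed
      also have "\<dots> = 1" using x(1) r2 unfolding rnorm_def by simp
      finally have "rnorm s V y = 1" unfolding rnorm_def using s2 by simp
      then show "slap_form s V (shadow s E) y \<in> {slap_form s V (shadow s E) y | y. rnorm s V y = 1}"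
        by blast
    qed
    then have "slap_form s V (shadow s E) y / C \<le> Q / C" using Cp by (simp add: divide_right_mono)
    finally show "u \<le> Q / C" using x by simp
  qed
  then show ?thesis unfolding Q_def C_def .
qed

theorem lemma8p1:
  fixes V :: "'a set" and E :: "'a set set" and r s :: nat
  assumes "r \<ge> 2" and "2 \<le> s" and "s \<le> r"
    and "V \<noteq> {}"
    and "uniform_hypergraph r V E" and "linear_hypergraph E"
  shows "q_spec r V E \<le> q_spec s V (shadow s E) / real ((r - 1) choose (s - 1))
         \<and> real (r - 1) * q_spec r V E \<le> q_spec 2 V (shadow 2 E)"
proof
  show "q_spec r V E \<le> q_spec s V (shadow s E) / real ((r - 1) choose (s - 1))"
    using part1[OF assms] .
  have h: "q_spec r V E \<le> q_spec 2 V (shadow 2 E) / real ((r - 1) choose (2 - 1))"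
    using part1[of r 2 V E] assms by simp
  have "real (r - 1) > 0" using assms by simp
  then show "real (r - 1) * q_spec r V E \<le> q_spec 2 V (shadow 2 E)"
    using h by (simp add: pos_le_divide_eq mult.commute)
qed

end
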